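(* If $G \le \mathrm{Sym}(\mathbb{N})$ is a maximal cofinitary group, then the natural action of $G$ on $\mathbb{N}$ (given by $g\cdot n = g(n)$) has only finitely many orbits.
   Context: $\mathrm{Sym}(\mathbb{N})$ is the group of bijections $\mathbb{N}\to\mathbb{N}$ under composition. A permutation is cofinitary if it is the identity or has only finitely many fixed points. A subgroup $G\le\mathrm{Sym}(\mathbb{N})$ is a cofinitary group if all its elements are cofinitary; it is a maximal cofinitary group if it is cofinitary and not properly contained in another cofinitary subgroup of $\mathrm{Sym}(\mathbb{N})$. *)

theory Defs
  imports Main
begin

definition SymN :: "(nat \<Rightarrow> nat) set" where
  "SymN = {f. bij f}"

definition subgroup_SymN :: "(nat \<Rightarrow> nat) set \<Rightarrow> bool" where
  "subgroup_SymN G \<longleftrightarrow> G \<subseteq> SymN \<and> id \<in> G \<and>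
     (\<forall>f\<in>G. \<forall>g\<in>G. f \<circ> g \<in> G) \<and> (\<forall>f\<in>G. inv f \<in> G)"

definition cofinitary :: "(nat \<Rightarrow> nat) \<Rightarrow> bool" where
  "cofinitary f \<longleftrightarrow> f = id \<or> finite {n. f n = n}"

definition cofinitary_group :: "(nat \<Rightarrow> nat) set \<Rightarrow> bool" where
  "cofinitary_group G \<longleftrightarrow> subgroup_SymN G \<and> (\<forall>f\<in>G. cofinitary f)"

definition maximal_cofinitary_group :: "(nat \<Rightarrow> nat) set \<Rightarrow> bool" where
  "maximal_cofinitary_group G \<longleftrightarrow> cofinitary_group G \<and>
     (\<forall>H. cofinitary_group H \<and> G \<subseteq> H \<longrightarrow> H = G)"

definition orbit :: "(nat \<Rightarrow> nat) set \<Rightarrow> nat \<Rightarrow> nat set" where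
  "orbit G n = {g n | g. g \<in> G}"

end

theory Submission
  imports Defs "HOL-Library.Countable_Set"
begin


definition hp :: "(nat\<Rightarrow>nat) \<Rightarrow> bool \<Rightarrow> nat \<Rightarrow> nat" where
  "hp h e = (if e then h else inv h)"

definition touched :: "(nat\<Rightarrow>nat) \<Rightarrow> (nat\<times>nat) set \<Rightarrow> nat set" where
  "touched c P = c ` (Domain P \<union> Range P)"
definition nxt :: "(nat\<Rightarrow>nat) \<Rightarrow> (nat\<times>nat) set \<Rightarrow> nat \<Rightarrow> nat" where
  "nxt c P a = Suc (Max (insert (c a) (touched c P)))"
definition rep :: "(nat\<Rightarrow>nat) \<Rightarrow> nat \<Rightarrow> nat" where
  "rep c k = (SOME x. c x = k)"

fun Ps :: "(nat\<Rightarrow>nat) \<Rightarrow> nat \<Rightarrow> (nat\<times>nat) set" where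
  "Ps c 0 = {}"
| "Ps c (Suc t) = (if even t then
      (if t div 2 \<in> Domain (Ps c t) then Ps c t
       else insert (t div 2, rep c (nxt c (Ps c t) (t div 2))) (Ps c t))
    else (if t div 2 \<in> Range (Ps c t) then Ps c t
       else insert (rep c (nxt c (Ps c t) (t div 2)), t div 2) (Ps c t)))"

definition invP :: "(nat\<Rightarrow>nat) \<Rightarrow> (nat\<times>nat) set \<Rightarrow> bool" where
  "invP c P \<longleftrightarrow> (\<forall>a b b'. (a,b)\<in>P \<longrightarrow> (a,b')\<in>P \<longrightarrow> b = b') \<and>
     (\<forall>a a' b. (a,b)\<in>P \<longrightarrow> (a',b)\<in>P \<longrightarrow> a = a') \<and>
     (\<forall>a b. (a,b)\<in>P \<longrightarrow> c a \<noteq> c b) \<and>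
     (\<forall>a b a' b'. (a,b)\<in>P \<longrightarrow> (a',b')\<in>P \<longrightarrow> max (c a) (c b) = max (c a') (c b') \<longrightarrow> a = a' \<and> b = b')"

lemma rep: "surj c \<Longrightarrow> c (rep c k) = k"
  unfolding rep_def by (metis (mono_tags) someI surj_def)

lemma nxt_gt:
  assumes "finite P"
  shows "c a < nxt c P a" "(x,y) \<in> P \<Longrightarrow> c x < nxt c P a" "(x,y) \<in> P \<Longrightarrow> c y < nxt c P a"
proof -
  have fin: "finite (insert (c a) (touched c P))"
    using assms by (simp add: touched_def finite_Domain finite_Range)
  show "c a < nxt c P a" unfolding nxt_def using fin by (simp add: less_Suc_eq_le)
  show "(x,y) \<in> P \<Longrightarrow> c x < nxt c P a" unfolding nxt_def using fin
    by (simp add: less_Suc_eq_le touched_def Domain.DomainI)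
  show "(x,y) \<in> P \<Longrightarrow> c y < nxt c P a" unfolding nxt_def using fin
    by (simp add: less_Suc_eq_le touched_def Range.RangeI)
qed

lemma invP_insert:
  assumes "invP c P" "a \<notin> Domain P" "b \<notin> Range P" "c a \<noteq> c b"
    "\<And>x y. (x,y)\<in>P \<Longrightarrow> max (c x) (c y) \<noteq> max (c a) (c b)"
  shows "invP c (insert (a, b) P)"
proof -
  have i1: "\<forall>a b b'. (a,b)\<in>P \<longrightarrow> (a,b')\<in>P \<longrightarrow> b = b'"
   and i2: "\<forall>a a' b. (a,b)\<in>P \<longrightarrow> (a',b)\<in>P \<longrightarrow> a = a'"
   and i3: "\<forall>a b. (a,b)\<in>P \<longrightarrow> c a \<noteq> c b"
   and i4: "\<forall>a b a' b'. (a,b)\<in>P \<longrightarrow> (a',b')\<in>P \<longrightarrow> max (c a) (c b) = max (c a') (c b') \<longrightarrow> a = a' \<and> b = b'"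
    using assms(1) unfolding invP_def by blast+
  have j1: "\<forall>x y y'. (x,y) \<in> insert (a,b) P \<longrightarrow> (x,y') \<in> insert (a,b) P \<longrightarrow> y = y'"
    using i1 assms(2) by blast
  have j2: "\<forall>x x' y. (x,y) \<in> insert (a,b) P \<longrightarrow> (x',y) \<in> insert (a,b) P \<longrightarrow> x = x'"
    using i2 assms(3) by blast
  have j3: "\<forall>x y. (x,y) \<in> insert (a,b) P \<longrightarrow> c x \<noteq> c y" using i3 assms(4) by blast
  have j4: "\<forall>x y x' y'. (x,y) \<in> insert (a,b) P \<longrightarrow> (x',y') \<in> insert (a,b) P \<longrightarrow>
      max (c x) (c y) = max (c x') (c y') \<longrightarrow> x = x' \<and> y = y'"
  proof (intro allI impI)
    fix x y x' y' assume h: "(x,y) \<in> insert (a,b) P" "(x',y') \<in> insert (a,b) P"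
      "max (c x) (c y) = max (c x') (c y')"
    have A: "(x,y) = (a,b) \<Longrightarrow> (x',y') \<noteq> (a,b) \<Longrightarrow> False"
      using assms(5) h by fastforce
    have B: "(x,y) \<noteq> (a,b) \<Longrightarrow> (x',y') = (a,b) \<Longrightarrow> False"
      using assms(5) h by fastforce
    have C: "(x,y) \<noteq> (a,b) \<Longrightarrow> (x',y') \<noteq> (a,b) \<Longrightarrow> x = x' \<and> y = y'"
      using i4 h by blast
    show "x = x' \<and> y = y'" using A B C by fastforce
  qed
  show ?thesis unfolding invP_def using j1 j2 j3 j4 by blast
qed

lemma invP_add1:
  assumes "surj c" "finite P" "invP c P" "a \<notin> Domain P"
  shows "invP c (insert (a, rep c (nxt c P a)) P)"
proof -
  let ?k = "nxt c P a" let ?b = "rep c ?k"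
  have cb: "c ?b = ?k" using rep assms(1) by blast
  have old: "(x,y)\<in>P \<Longrightarrow> c x < ?k \<and> c y < ?k" for x y using nxt_gt[OF assms(2)] by blast
  have ca: "c a < ?k" using nxt_gt[OF assms(2)] by blast
  have bD: "?b \<notin> Range P" using old cb by fastforce
  show ?thesis
    by (rule invP_insert[OF assms(3,4) bD]) (use ca cb old in \<open>auto simp: max_def; fastforce dest: old\<close>)+
qed

lemma invP_add2:
  assumes "surj c" "finite P" "invP c P" "a \<notin> Range P"
  shows "invP c (insert (rep c (nxt c P a), a) P)"
proof -
  let ?k = "nxt c P a" let ?b = "rep c ?k"
  have cb: "c ?b = ?k" using rep assms(1) by blast
  have old: "(x,y)\<in>P \<Longrightarrow> c x < ?k \<and> c y < ?k" for x y using nxt_gt[OF assms(2)] by blast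
  have ca: "c a < ?k" using nxt_gt[OF assms(2)] by blast
  have bD: "?b \<notin> Domain P" using old cb by fastforce
  show ?thesis
    by (rule invP_insert[OF assms(3) bD assms(4)]) (use ca cb old in \<open>auto simp: max_def; fastforce dest: old\<close>)+
qed

lemma Ps_inv: "surj c \<Longrightarrow> finite (Ps c t) \<and> invP c (Ps c t)"
proof (induction t)
  case 0 then show ?case by (simp add: invP_def)
next
  case (Suc t) then show ?case
    using invP_add1[of c "Ps c t" "t div 2"] invP_add2[of c "Ps c t" "t div 2"] by auto
qed

lemma Ps_mono: "t \<le> s \<Longrightarrow> Ps c t \<subseteq> Ps c s"
proof (induction s)
  case 0 then show ?case by simp
next
  case (Suc s) then show ?case by (cases "t = Suc s") auto
qed

lemma Ps_dom: "n \<in> Domain (Ps c (Suc (2*n)))" by auto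
lemma Ps_ran: "n \<in> Range (Ps c (Suc (Suc (2*n))))"
proof -
  have "odd (Suc (2*n))" by simp
  moreover have "Suc (2*n) div 2 = n" by simp
  ultimately show ?thesis by (simp only: Ps.simps) auto
qed

definition Pall :: "(nat\<Rightarrow>nat) \<Rightarrow> (nat\<times>nat) set" where
  "Pall c = (\<Union>t. Ps c t)"
definition hmap :: "(nat\<Rightarrow>nat) \<Rightarrow> nat \<Rightarrow> nat" where
  "hmap c x = (THE y. (x,y) \<in> Pall c)"

lemma Pall_two:
  assumes "surj c" "(x,y)\<in>Pall c" "(x',y')\<in>Pall c"
  shows "\<exists>P. invP c P \<and> (x,y)\<in>P \<and> (x',y')\<in>P"
proof -
  obtain t t' where "(x,y) \<in> Ps c t" "(x',y') \<in> Ps c t'" using assms(2,3) unfolding Pall_def by blast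
  then have "(x,y) \<in> Ps c (max t t')" "(x',y') \<in> Ps c (max t t')"
    using Ps_mono[of t "max t t'" c] Ps_mono[of t' "max t t'" c] by auto
  then show ?thesis using Ps_inv[OF assms(1)] by blast
qed

lemma Pall_fun: "surj c \<Longrightarrow> (x,y)\<in>Pall c \<Longrightarrow> (x,y')\<in>Pall c \<Longrightarrow> y = y'"
  using Pall_two unfolding invP_def by metis
lemma Pall_inj: "surj c \<Longrightarrow> (x,y)\<in>Pall c \<Longrightarrow> (x',y)\<in>Pall c \<Longrightarrow> x = x'"
  using Pall_two unfolding invP_def by metis
lemma Pall_neq: "surj c \<Longrightarrow> (x,y)\<in>Pall c \<Longrightarrow> c x \<noteq> c y"
  using Pall_two unfolding invP_def by metis
lemma Pall_max: "surj c \<Longrightarrow> (x,y)\<in>Pall c \<Longrightarrow> (x',y')\<in>Pall c \<Longrightarrow>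
   max (c x) (c y) = max (c x') (c y') \<Longrightarrow> x = x' \<and> y = y'"
  using Pall_two unfolding invP_def by metis

lemma Pall_dom: "\<exists>y. (x,y) \<in> Pall c"
  using Ps_dom[of x c] unfolding Pall_def by blast
lemma Pall_ran: "\<exists>x. (x,y) \<in> Pall c"
  using Ps_ran[of y c] unfolding Pall_def by blast

lemma hmap_in: "surj c \<Longrightarrow> (x, hmap c x) \<in> Pall c"
  unfolding hmap_def using Pall_dom[of x c] Pall_fun[of c x] by (metis theI)

lemma construction:
  assumes "surj c"
  shows "bij (hmap c) \<and> (\<forall>x. c (hmap c x) \<noteq> c x) \<and>
    (\<forall>p q e f. c p = c q \<longrightarrow> c (hp (hmap c) e p) < c p \<longrightarrow> c (hp (hmap c) f q) < c q \<longrightarrow> p = q \<and> e = f)"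
proof -
  let ?h = "hmap c"
  have inj: "inj ?h" using Pall_inj[OF assms] hmap_in[OF assms] by (metis injI)
  have sur: "surj ?h"
    unfolding surj_def
  proof
    fix y obtain x where "(x,y) \<in> Pall c" using Pall_ran by blast
    then show "\<exists>x. y = ?h x" using Pall_fun[OF assms] hmap_in[OF assms] by metis
  qed
  have bij: "bij ?h" using inj sur by (simp add: bij_def)
  have T1: "\<forall>x. c (?h x) \<noteq> c x" using Pall_neq[OF assms] hmap_in[OF assms] by metis
  have hinv: "?h (inv ?h p) = p" for p using sur by (simp add: surj_f_inv_f)
  have edge: "\<exists>a b. (a,b) \<in> Pall c \<and> max (c a) (c b) = c p \<and> (if e then a = p \<and> b = ?h p else b = p \<and> a = inv ?h p)"
    if "c (hp ?h e p) < c p" for e p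
  proof (cases e)
    case True then show ?thesis using that hmap_in[OF assms, of p] by (auto simp: hp_def)
  next
    case False then show ?thesis using that hmap_in[OF assms, of "inv ?h p"] hinv[of p] by (auto simp: hp_def)
  qed
  have T2: "p = q \<and> e = f" if "c p = c q" "c (hp ?h e p) < c p" "c (hp ?h f q) < c q" for p q e f
  proof -
    note th = that
    obtain a b where ab: "(a,b) \<in> Pall c" "max (c a) (c b) = c p" "(if e then a = p \<and> b = ?h p else b = p \<and> a = inv ?h p)"
      using edge[OF th(2)] by blast
    obtain a' b' where ab': "(a',b') \<in> Pall c" "max (c a') (c b') = c q" "(if f then a' = q \<and> b' = ?h q else b' = q \<and> a' = inv ?h q)"
      using edge[OF th(3)] by blast
    have eq: "a = a' \<and> b = b'" using Pall_max[OF assms ab(1) ab'(1)] ab(2) ab'(2) th(1) by simp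
    show ?thesis
    proof (cases e; cases f)
      assume "e" "f" then show ?thesis using ab ab' eq by auto
    next
      assume "e" "\<not> f" then have "p = inv ?h q" "?h p = q" using ab ab' eq by auto
      then show ?thesis using th(2) \<open>e\<close> th(1) by (simp add: hp_def)
    next
      assume "\<not>e" "f" then have "q = inv ?h p" "?h q = p" using ab ab' eq by auto
      then show ?thesis using th(3) \<open>f\<close> th(1) by (simp add: hp_def)
    next
      assume "\<not>e" "\<not>f" then show ?thesis using ab ab' eq by auto
    qed
  qed
  show ?thesis using bij T1 T2 by blast
qed



lemma hp_back: "bij h \<Longrightarrow> hp h (\<not>e) (hp h e y) = y"
  by (auto simp: hp_def bij_def inv_f_f surj_f_inv_f)

lemma hp_T1: "bij h \<Longrightarrow> \<forall>x. c (h x) \<noteq> c x \<Longrightarrow> c (hp h e y) \<noteq> c y"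
  by (cases e) (auto simp: hp_def bij_def surj_f_inv_f, metis surj_f_inv_f)

lemma walk:
  fixes c h :: "nat \<Rightarrow> nat" and Y Z :: "nat \<Rightarrow> nat" and E :: "nat \<Rightarrow> bool"
  assumes bh: "bij h" and T1: "\<forall>x. c (h x) \<noteq> c x"
   and T2: "\<forall>p q e f. c p = c q \<longrightarrow> c (hp h e p) < c p \<longrightarrow> c (hp h f q) < c q \<longrightarrow> p = q \<and> e = f"
   and st: "\<forall>i. 1 \<le> i \<and> i \<le> m \<longrightarrow> Z i = hp h (E i) (Y (i-1)) \<and> c (Y i) = c (Z i)"
   and nb: "\<forall>i. 1 \<le> i \<and> i < m \<longrightarrow> \<not> (Y i = Z i \<and> E (Suc i) = (\<not> E i))"
  shows "a < b \<Longrightarrow> b \<le> m \<Longrightarrow> c (Z b) \<noteq> c (Y a)"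
proof -
  have neq: "c (Z i) \<noteq> c (Y (i-1))" if "1 \<le> i" "i \<le> m" for i
    using st that hp_T1[OF bh T1] by metis
  have prp: "c (Y i) < c (Z (Suc i))" if "1 \<le> i" "i < m" "c (Y (i-1)) < c (Z i)" for i
  proof (rule ccontr)
    assume "\<not> c (Y i) < c (Z (Suc i))"
    moreover have "c (Z (Suc i)) \<noteq> c (Y i)" using neq[of "Suc i"] that by simp
    ultimately have up1: "c (hp h (E (Suc i)) (Y i)) < c (Y i)" using st that by auto
    have zi: "Z i = hp h (E i) (Y (i-1))" and yz: "c (Y i) = c (Z i)" using st that by auto
    have up2: "c (hp h (\<not> E i) (Z i)) < c (Z i)" using zi hp_back[OF bh] that(3) by simp
    have "Y i = Z i \<and> E (Suc i) = (\<not> E i)" using T2 yz up1 up2 by blast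
    then show False using nb that by auto
  qed
  have alldown: "\<forall>j. a < j \<and> j \<le> b \<longrightarrow> c (Y (j-1)) < c (Z j)"
    if "a < b" "b \<le> m" "c (Y a) < c (Z (Suc a))" for a b
    using that
  proof (induction b)
    case 0 then show ?case by simp
  next
    case (Suc b)
    show ?case
    proof (cases "a < b")
      case True
      then have IH: "\<forall>j. a < j \<and> j \<le> b \<longrightarrow> c (Y (j-1)) < c (Z j)" using Suc by simp
      have "c (Y b) < c (Z (Suc b))" using prp[of b] IH True Suc.prems by simp
      then show ?thesis using IH by (auto simp: le_Suc_eq)
    next
      case False then have "b = a" using Suc.prems by simp
      then show ?thesis using Suc.prems by (auto simp: le_Suc_eq)
    qed
  qed
  have mono_up: "c (Y a) < c (Z b)" if "a < b" "b \<le> m" "\<forall>j. a < j \<and> j \<le> b \<longrightarrow> c (Y (j-1)) < c (Z j)" for a b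
    using that
  proof (induction b)
    case 0 then show ?case by simp
  next
    case (Suc b)
    show ?case
    proof (cases "a < b")
      case True
      then have "c (Y a) < c (Z b)" using Suc by simp
      moreover have "c (Y b) = c (Z b)" using st True Suc.prems by auto
      moreover have "c (Y b) < c (Z (Suc b))" using Suc.prems(3)[rule_format, of "Suc b"] True by simp
      ultimately show ?thesis by simp
    next
      case False then have "b = a" using Suc.prems by simp
      then show ?thesis using Suc.prems by auto
    qed
  qed
  have mono_dn: "c (Z b) < c (Y a)" if "a < b" "b \<le> m" "\<forall>j. a < j \<and> j \<le> b \<longrightarrow> c (Z j) < c (Y (j-1))" for a b
    using that
  proof (induction b)
    case 0 then show ?case by simp
  next
    case (Suc b)
    show ?case
    proof (cases "a < b")
      case True
      then have "c (Z b) < c (Y a)" using Suc by simp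
      moreover have "c (Y b) = c (Z b)" using st True Suc.prems by auto
      moreover have "c (Z (Suc b)) < c (Y b)" using Suc.prems(3)[rule_format, of "Suc b"] True by simp
      ultimately show ?thesis by simp
    next
      case False then have "b = a" using Suc.prems by simp
      then show ?thesis using Suc.prems by auto
    qed
  qed
  show "a < b \<Longrightarrow> b \<le> m \<Longrightarrow> c (Z b) \<noteq> c (Y a)"
  proof (induction "b - a" arbitrary: a b rule: less_induct)
    case less
    show ?case
    proof (cases "c (Y a) < c (Z (Suc a))")
      case True
      then show ?thesis using mono_up[OF less.prems] alldown[OF less.prems True] by simp
    next
      case False
      then have upa: "c (Z (Suc a)) < c (Y a)" using neq[of "Suc a"] less.prems by auto
      show ?thesis
      proof (cases "c (Z b) < c (Y (b-1))")
        case True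
        have "\<forall>j. a < j \<and> j \<le> b \<longrightarrow> c (Z j) < c (Y (j-1))"
        proof (intro allI impI)
          fix j assume j: "a < j \<and> j \<le> b"
          show "c (Z j) < c (Y (j-1))"
          proof (rule ccontr)
            assume "\<not> c (Z j) < c (Y (j-1))"
            then have d: "c (Y (j-1)) < c (Z j)" using neq[of j] j less.prems by auto
            have "j - 1 < b" using j by auto
            then have "\<forall>i. j-1 < i \<and> i \<le> b \<longrightarrow> c (Y (i-1)) < c (Z i)"
              using alldown[of "j-1" b] d j less.prems by auto
            then have "c (Y (b-1)) < c (Z b)" using \<open>j - 1 < b\<close> by auto
            then show False using True by simp
          qed
        qed
        then show ?thesis using mono_dn[OF less.prems] by simp
      next
        case False
        then have dnb: "c (Y (b-1)) < c (Z b)" using neq[of b] less.prems by auto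
        show ?thesis
        proof
          assume eqc: "c (Z b) = c (Y a)"
          have zb: "Z b = hp h (E b) (Y (b-1))" using st less.prems by auto
          have up2: "c (hp h (\<not> E b) (Z b)) < c (Z b)" using zb hp_back[OF bh] dnb by simp
          have za: "Z (Suc a) = hp h (E (Suc a)) (Y a)" using st less.prems by auto
          have up1: "c (hp h (E (Suc a)) (Y a)) < c (Y a)" using za upa by simp
          have "Y a = Z b \<and> E (Suc a) = (\<not> E b)" using T2 up1 up2 eqc by metis
          then have z1: "Z (Suc a) = Y (b-1)" using za zb hp_back[OF bh] by simp
          have "b \<noteq> Suc a" using upa dnb eqc by auto
          then have ab2: "Suc a < b - 1 \<or> Suc a = b - 1" using less.prems by auto
          then show False
          proof
            assume "Suc a = b - 1"
            then have "Y (Suc a) = Z (Suc a) \<and> E (Suc (Suc a)) = (\<not> E (Suc a))"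
              using z1 \<open>Y a = Z b \<and> E (Suc a) = (\<not> E b)\<close> less.prems by (metis Suc_diff_1 gr_implies_not0 not_gr0)
            moreover have "Suc a < m" using \<open>Suc a = b - 1\<close> less.prems by simp
            ultimately show False using nb by auto
          next
            assume lt: "Suc a < b - 1"
            have "c (Z (b-1)) \<noteq> c (Y (Suc a))" using less.hyps[of "b-1" "Suc a"] lt less.prems by auto
            moreover have "c (Y (Suc a)) = c (Z (Suc a))" using st less.prems by auto
            moreover have "c (Y (b-1)) = c (Z (b-1))" using st less.prems lt by auto
            ultimately show False using z1 by simp
          qed
        qed
      qed
    qed
  qed
qed



fun evalw :: "(nat\<Rightarrow>nat) \<Rightarrow> (nat\<Rightarrow>nat) \<Rightarrow> (bool \<times> (nat\<Rightarrow>nat)) list \<Rightarrow> nat \<Rightarrow> nat" where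
  "evalw h g0 [] = g0"
| "evalw h g0 (p # s) = snd p \<circ> hp h (fst p) \<circ> evalw h g0 s"

definition red :: "(bool \<times> (nat\<Rightarrow>nat)) list \<Rightarrow> bool" where
  "red s \<longleftrightarrow> (\<forall>j. Suc j < length s \<longrightarrow> fst (s!j) = (\<not> fst (s!Suc j)) \<longrightarrow> snd (s!Suc j) \<noteq> id)"

definition NF :: "(nat\<Rightarrow>nat) set \<Rightarrow> (nat\<Rightarrow>nat) \<Rightarrow> (nat\<Rightarrow>nat) \<Rightarrow> bool" where
  "NF G h f \<longleftrightarrow> (\<exists>g0 s. g0 \<in> G \<and> (\<forall>p\<in>set s. snd p \<in> G) \<and> red s \<and> f = evalw h g0 s)"

inductive_set Hg :: "(nat\<Rightarrow>nat) set \<Rightarrow> (nat\<Rightarrow>nat) \<Rightarrow> (nat\<Rightarrow>nat) set" for G h where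
  Hid: "id \<in> Hg G h"
| Hstep: "f \<in> Hg G h \<Longrightarrow> a \<in> G \<union> {h, inv h} \<Longrightarrow> a \<circ> f \<in> Hg G h"

lemma red_tail: "red (p # s) \<Longrightarrow> red s"
  unfolding red_def
  apply (intro allI impI)
  subgoal for j by (drule spec[of _ "Suc j"]) auto
  done

lemma red_cons_id: "red ((e', g') # s) \<Longrightarrow> (g' = id \<longrightarrow> e \<noteq> (\<not> e')) \<Longrightarrow> red ((e, id) # (e', g') # s)"
  unfolding red_def
  apply (intro allI impI)
  subgoal for j by (cases j) auto
  done

lemma red_head: "red ((e, g') # s) \<Longrightarrow> red ((e, g) # s)"
  unfolding red_def
  apply (intro allI impI)
  subgoal for j by (drule spec[of _ j]) (cases j, auto)
  done

lemma red_single: "red [p]" unfolding red_def by simp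

lemma hp_comp: "bij h \<Longrightarrow> hp h (\<not>e) \<circ> hp h e = id"
  using hp_back by (auto simp: fun_eq_iff)

lemma G_comp: "subgroup_SymN G \<Longrightarrow> f \<in> G \<Longrightarrow> g \<in> G \<Longrightarrow> f \<circ> g \<in> G"
  unfolding subgroup_SymN_def by blast
lemma G_id: "subgroup_SymN G \<Longrightarrow> id \<in> G"
  unfolding subgroup_SymN_def by blast
lemma G_inv: "subgroup_SymN G \<Longrightarrow> f \<in> G \<Longrightarrow> inv f \<in> G"
  unfolding subgroup_SymN_def by blast
lemma G_bij: "subgroup_SymN G \<Longrightarrow> f \<in> G \<Longrightarrow> bij f"
  unfolding subgroup_SymN_def SymN_def by blast

lemma NF_intro: "g0 \<in> G \<Longrightarrow> \<forall>p\<in>set s. snd p \<in> G \<Longrightarrow> red s \<Longrightarrow> f = evalw h g0 s \<Longrightarrow> NF G h f"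
  unfolding NF_def by blast

lemma NF_left_G:
  assumes G: "subgroup_SymN G" and "NF G h f" "a \<in> G"
  shows "NF G h (a \<circ> f)"
proof -
  obtain g0 s where gs: "g0 \<in> G" "\<forall>p\<in>set s. snd p \<in> G" "red s" "f = evalw h g0 s"
    using assms(2) unfolding NF_def by blast
  show ?thesis
  proof (cases s)
    case Nil
    show ?thesis
    proof (rule NF_intro[of "a \<circ> g0" G "[]"])
      show "a \<circ> g0 \<in> G" using G_comp[OF G assms(3) gs(1)] .
      show "a \<circ> f = evalw h (a \<circ> g0) []" using gs(4) Nil by simp
    qed (auto simp: red_def)
  next
    case (Cons p s')
    obtain e g where p: "p = (e,g)" by fastforce
    show ?thesis
    proof (rule NF_intro[of g0 G "(e, a \<circ> g) # s'"])
      show "a \<circ> f = evalw h g0 ((e, a \<circ> g) # s')" using gs(4) Cons p by (simp add: comp_assoc)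
      show "red ((e, a \<circ> g) # s')" using red_head gs(3) Cons p by blast
      have "g \<in> G" "\<forall>q\<in>set s'. snd q \<in> G" using gs(2) Cons p by auto
      then show "\<forall>q\<in>set ((e, a \<circ> g) # s'). snd q \<in> G"
        using G_comp[OF G assms(3)] by auto
    qed (rule gs(1))
  qed
qed

lemma NF_left_h:
  assumes G: "subgroup_SymN G" and bh: "bij h" and "NF G h f"
  shows "NF G h (hp h e \<circ> f)"
proof -
  obtain g0 s where gs: "g0 \<in> G" "\<forall>p\<in>set s. snd p \<in> G" "red s" "f = evalw h g0 s"
    using assms(3) unfolding NF_def by blast
  show ?thesis
  proof (cases s)
    case Nil
    show ?thesis
    proof (rule NF_intro[of g0 G "[(e, id)]"])
      show "hp h e \<circ> f = evalw h g0 [(e, id)]" using gs(4) Nil by simp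
      show "\<forall>q\<in>set [(e, id)]. snd q \<in> G" using G_id[OF G] by simp
    qed (auto simp: gs(1) red_single)
  next
    case (Cons p s')
    obtain e' g where p: "p = (e',g)" by fastforce
    show ?thesis
    proof (cases "g = id \<and> e = (\<not> e')")
      case True
      have "hp h e \<circ> f = (hp h (\<not> e') \<circ> hp h e') \<circ> evalw h g0 s'"
        using gs(4) Cons p True by (simp add: comp_assoc)
      also have "\<dots> = evalw h g0 s'" using hp_comp[OF bh, of e'] by simp
      finally show ?thesis using NF_intro[of g0 G s'] gs Cons red_tail by auto
    next
      case False
      show ?thesis
      proof (rule NF_intro[of g0 G "(e, id) # (e',g) # s'"])
        show "hp h e \<circ> f = evalw h g0 ((e, id) # (e',g) # s')" using gs(4) Cons p by simp
        show "red ((e, id) # (e',g) # s')" using red_cons_id gs(3) Cons p False by blast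
        show "\<forall>q\<in>set ((e, id) # (e',g) # s'). snd q \<in> G" using gs(2) Cons p G_id[OF G] by auto
      qed (rule gs(1))
    qed
  qed
qed

lemma Hg_NF:
  assumes G: "subgroup_SymN G" and bh: "bij h"
  shows "f \<in> Hg G h \<Longrightarrow> NF G h f"
proof (induction rule: Hg.induct)
  case Hid
  show ?case unfolding NF_def using G_id[OF G]
    by (intro exI[of _ id] exI[of _ "[]"]) (simp add: red_def)
next
  case (Hstep f a)
  then consider "a \<in> G" | "a = hp h True" | "a = hp h False" by (auto simp: hp_def)
  then show ?case
  proof cases
    case 1 then show ?thesis using NF_left_G[OF G Hstep.IH] by blast
  next
    case 2 then show ?thesis using NF_left_h[OF G bh Hstep.IH, of True] by (simp only:)
  next
    case 3 then show ?thesis using NF_left_h[OF G bh Hstep.IH, of False] by (simp only:)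
  qed
qed

lemma Hg_comp: "f \<in> Hg G h \<Longrightarrow> k \<in> Hg G h \<Longrightarrow> f \<circ> k \<in> Hg G h"
proof (induction rule: Hg.induct)
  case Hid then show ?case by simp
next
  case (Hstep f a) then show ?case by (metis Hg.Hstep comp_assoc)
qed

lemma Hg_letter: "a \<in> G \<union> {h, inv h} \<Longrightarrow> a \<in> Hg G h"
  using Hg.Hstep[OF Hg.Hid] by fastforce

lemma Hg_bij: assumes "subgroup_SymN G" "bij h" shows "f \<in> Hg G h \<Longrightarrow> bij f"
proof (induction rule: Hg.induct)
  case Hid show ?case by (rule bij_id)
next
  case (Hstep f a)
  have "bij a" using Hstep G_bij[of G a] bij_imp_bij_inv[of h] assms by auto
  then show ?case using Hstep bij_comp by blast
qed

lemma Hg_inv: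
  assumes G: "subgroup_SymN G" and bh: "bij h"
  shows "f \<in> Hg G h \<Longrightarrow> inv f \<in> Hg G h"
proof (induction rule: Hg.induct)
  case Hid then show ?case by (metis Hg.Hid inv_id)
next
  case (Hstep f a)
  have ba: "bij a" using Hstep G_bij[of G a] G bij_imp_bij_inv[of h] bh by auto
  have bf: "bij f" using Hg_bij[OF G bh Hstep.hyps(1)] .
  have "inv a \<in> G \<union> {h, inv h}" using Hstep.hyps(2) G_inv[OF G] bh inv_inv_eq[of h] by auto
  then have "inv a \<in> Hg G h" by (rule Hg_letter)
  moreover have "inv (a \<circ> f) = inv f \<circ> inv a" using o_inv_distrib[OF ba bf] .
  ultimately show ?case using Hg_comp Hstep.IH by metis
qed

lemma evalw_bij: "subgroup_SymN G \<Longrightarrow> bij h \<Longrightarrow> g0 \<in> G \<Longrightarrow> \<forall>p\<in>set s. snd p \<in> G \<Longrightarrow> bij (evalw h g0 s)"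
proof (induction s)
  case Nil then show ?case using G_bij by simp
next
  case (Cons p s)
  have "bij (hp h (fst p))" using Cons.prems(2) bij_imp_bij_inv[of h] by (simp add: hp_def)
  moreover have "bij (snd p)" using Cons.prems G_bij by auto
  ultimately have "bij (snd p \<circ> hp h (fst p) \<circ> evalw h g0 s)" using Cons by (intro bij_comp) auto
  then show ?case by (simp add: comp_def)
qed



lemma NF_cof:
  fixes c :: "nat \<Rightarrow> nat"
  assumes G: "subgroup_SymN G" and cof: "\<forall>f\<in>G. cofinitary f" and bh: "bij h"
    and T1: "\<forall>x. c (h x) \<noteq> c x"
    and T2: "\<forall>p q e f. c p = c q \<longrightarrow> c (hp h e p) < c p \<longrightarrow> c (hp h f q) < c q \<longrightarrow> p = q \<and> e = f"
    and cG: "\<forall>g\<in>G. \<forall>x. c (g x) = c x"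
    and nf: "NF G h f"
  shows "cofinitary f"
proof -
  obtain g0 s where gs: "g0 \<in> G" "\<forall>p\<in>set s. snd p \<in> G" "red s" "f = evalw h g0 s"
    using nf unfolding NF_def by blast
  show ?thesis
  proof (cases "s = []")
    case True then show ?thesis using gs cof by simp
  next
    case False
    define m where "m = length s"
    have m0: "0 < m" using False m_def by simp
    define E where "E i = fst (s ! (m - i))" for i
    define Gi where "Gi i = snd (s ! (m - i))" for i
    define Pf where "Pf i = evalw h g0 (drop (m - i) s)" for i
    define Zf where "Zf i = hp h (E i) \<circ> Pf (i - 1)" for i
    have Pf_step: "Pf i = Gi i \<circ> Zf i" if "1 \<le> i" "i \<le> m" for i
    proof -
      have "m - i < length s" using that m_def by simp
      then have "drop (m - i) s = s ! (m - i) # drop (Suc (m - i)) s" by (rule Cons_nth_drop_Suc[symmetric])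
      moreover have "Suc (m - i) = m - (i - 1)" using that by simp
      ultimately show ?thesis unfolding Pf_def Zf_def Gi_def E_def by (simp add: comp_assoc)
    qed
    have GiG: "Gi i \<in> G" if "1 \<le> i" "i \<le> m" for i
      using gs(2) that m_def unfolding Gi_def by (simp add: m0)
    have Pf_bij: "bij (Pf i)" for i
      unfolding Pf_def using evalw_bij[OF G bh gs(1)] gs(2) by (meson in_set_dropD)
    have Zf_inj: "inj (Zf i)" for i
    proof -
      have "bij (hp h (E i))" using bh bij_imp_bij_inv[of h] by (simp add: hp_def)
      then show ?thesis unfolding Zf_def using Pf_bij bij_comp bij_is_inj by blast
    qed
    have Pf0: "Pf 0 = g0" unfolding Pf_def m_def by simp
    have Pfm: "Pf m = f" unfolding Pf_def using gs(4) by simp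
    define I where "I = {i. 1 \<le> i \<and> i < m \<and> E (Suc i) = (\<not> E i)}"
    define Bad where "Bad = (\<Union>i\<in>I. Zf i -` {y. Gi i y = y})"
    have GiNid: "Gi i \<noteq> id" if "i \<in> I" for i
    proof -
      have i: "1 \<le> i" "i < m" "E (Suc i) = (\<not> E i)" using that I_def by auto
      define j where "j = m - Suc i"
      have "Suc j < length s" using i m_def j_def by simp
      moreover have "fst (s ! j) = E (Suc i)" unfolding E_def j_def by simp
      moreover have "Suc j = m - i" using i j_def by simp
      ultimately show ?thesis using gs(3) i unfolding red_def E_def Gi_def by metis
    qed
    have finBad: "finite Bad"
      unfolding Bad_def
    proof (rule finite_UN_I)
      show "finite I" unfolding I_def by auto
    next
      fix i assume "i \<in> I"
      then have "Gi i \<in> G" "Gi i \<noteq> id" using GiG GiNid I_def by auto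
      then have "finite {y. Gi i y = y}" using cof unfolding cofinitary_def by blast
      then show "finite (Zf i -` {y. Gi i y = y})" using Zf_inj by (rule finite_vimageI)
    qed
    have "{x. f x = x} \<subseteq> Bad"
    proof
      fix x assume fx: "x \<in> {x. f x = x}"
      show "x \<in> Bad"
      proof (rule ccontr)
        assume nb: "x \<notin> Bad"
        let ?Y = "\<lambda>i. Pf i x" let ?Z = "\<lambda>i. Zf i x"
        have st: "\<forall>i. 1 \<le> i \<and> i \<le> m \<longrightarrow> ?Z i = hp h (E i) (?Y (i-1)) \<and> c (?Y i) = c (?Z i)"
          using Pf_step GiG cG unfolding Zf_def by auto
        have nbk: "\<forall>i. 1 \<le> i \<and> i < m \<longrightarrow> \<not> (?Y i = ?Z i \<and> E (Suc i) = (\<not> E i))"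
        proof (intro allI impI notI)
          fix i assume i: "1 \<le> i \<and> i < m" and h: "?Y i = ?Z i \<and> E (Suc i) = (\<not> E i)"
          then have "i \<in> I" unfolding I_def by auto
          moreover have "Gi i (Zf i x) = Zf i x" using h Pf_step[of i] i by auto
          ultimately show False using nb unfolding Bad_def by auto
        qed
        have "c (?Z m) \<noteq> c (?Y 0)" using walk[where Y="?Y" and Z="?Z" and E=E and m=m and c=c and h=h, OF bh T1 T2 st nbk m0] by simp
        moreover have "c (?Y m) = c (?Z m)" using st m0 by auto
        moreover have "?Y m = x" using Pfm fx by simp
        moreover have "c (?Y 0) = c x" using Pf0 cG gs(1) by simp
        ultimately show False by simp
      qed
    qed
    then show ?thesis unfolding cofinitary_def using finBad finite_subset by blast
  qed
qed

lemma orbit_G: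
  assumes G: "subgroup_SymN G" and g: "g \<in> G"
  shows "orbit G (g x) = orbit G x"
proof
  show "orbit G (g x) \<subseteq> orbit G x"
    unfolding orbit_def using G_comp[OF G _ g] by (auto, metis comp_apply)
  show "orbit G x \<subseteq> orbit G (g x)"
  proof
    fix y assume "y \<in> orbit G x"
    then obtain k where k: "k \<in> G" "y = k x" unfolding orbit_def by blast
    have "inv g (g x) = x" using G_bij[OF G g] by (simp add: bij_is_inj inv_f_f)
    then have "y = (k \<circ> inv g) (g x)" using k by simp
    moreover have "k \<circ> inv g \<in> G" using G_comp[OF G k(1) G_inv[OF G g]] .
    ultimately show "y \<in> orbit G (g x)" unfolding orbit_def by blast
  qed
qed

theorem mainTheorem9:
  assumes "maximal_cofinitary_group G"
  shows "finite (orbit G ` UNIV)"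
proof (rule ccontr)
  assume inf: "infinite (orbit G ` UNIV)"
  have G: "subgroup_SymN G" and cof: "\<forall>f\<in>G. cofinitary f"
    and maxi: "\<forall>H. cofinitary_group H \<and> G \<subseteq> H \<longrightarrow> H = G"
    using assms unfolding maximal_cofinitary_group_def cofinitary_group_def by blast+
  define Orb where "Orb = orbit G ` UNIV"
  have cO: "countable Orb" unfolding Orb_def by simp
  define c where "c x = to_nat_on Orb (orbit G x)" for x
  have sc: "surj c"
    unfolding surj_def
  proof
    fix k
    obtain a where "a \<in> Orb" "to_nat_on Orb a = k" using to_nat_on_surj[OF cO inf[folded Orb_def]] by blast
    then show "\<exists>x. k = c x" unfolding c_def Orb_def by blast
  qed
  have cG: "\<forall>g\<in>G. \<forall>x. c (g x) = c x" unfolding c_def using orbit_G[OF G] by simp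
  define h where "h = hmap c"
  have hp1: "bij h" and T1: "\<forall>x. c (h x) \<noteq> c x"
    and T2: "\<forall>p q e f. c p = c q \<longrightarrow> c (hp h e p) < c p \<longrightarrow> c (hp h f q) < c q \<longrightarrow> p = q \<and> e = f"
    using construction[OF sc] unfolding h_def by blast+
  define H where "H = Hg G h"
  have "cofinitary_group H"
    unfolding cofinitary_group_def subgroup_SymN_def
  proof (intro conjI ballI)
    show "H \<subseteq> SymN" unfolding H_def SymN_def using Hg_bij[OF G hp1] by blast
    show "id \<in> H" unfolding H_def by (rule Hg.Hid)
    show "f \<circ> g \<in> H" if "f \<in> H" "g \<in> H" for f g using that Hg_comp unfolding H_def by blast
    show "inv f \<in> H" if "f \<in> H" for f using that Hg_inv[OF G hp1] unfolding H_def by blast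
    show "cofinitary f" if "f \<in> H" for f
      using NF_cof[OF G cof hp1 T1 T2 cG Hg_NF[OF G hp1]] that unfolding H_def by blast
  qed
  moreover have "G \<subseteq> H" unfolding H_def using Hg_letter by blast
  ultimately have "H = G" using maxi by blast
  moreover have "h \<in> H" unfolding H_def using Hg_letter by blast
  ultimately have "h \<in> G" by simp
  then show False using cG T1 by blast
qed


end
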